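(* Let $n\ge 2$ and let $X^n=\{x_1,\dots,x_n\}$ be the fence of $n$ points, i.e. the poset whose strict order relations are exactly $x_i<x_{i+1}$ for odd $i$ and $x_i>x_{i+1}$ for even $i$ ($1\le i\le n-1$), so $x_1<x_2>x_3<x_4>\cdots$. Then $\det(X^n_M-\lambda I)=(-1)^n\lambda(\lambda-(n-2))(\lambda+1)^{n-2}$.
   Context: For a finite poset $X=\{x_1,\dots,x_n\}$, $X_M=(x_{i,j})$ is the $n\times n$ matrix with $x_{i,j}=0$ if $x_i\le x_j$ and $x_{i,j}=1$ otherwise. The characteristic polynomial is taken as $p_X(\lambda)=\det(X_M-\lambda I)$. *)

theory Defs
  imports "Jordan_Normal_Form.Char_Poly"
begin

definition fence_le :: "nat \<Rightarrow> nat \<Rightarrow> bool" where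
  "fence_le i j \<longleftrightarrow> i = j \<or> (odd i \<and> j = i + 1) \<or> (even j \<and> i = j + 1)"

text \<open>The matrix X_M: entry (i,j) is 0 if x_i \<le> x_j and 1 otherwise
  (0-based matrix indices, point k+1 at index k).\<close>
definition fence_matrix :: "nat \<Rightarrow> int mat" where
  "fence_matrix n = mat n n (\<lambda>(i, j). if fence_le (i + 1) (j + 1) then 0 else 1)"

definition poset_char_poly :: "int mat \<Rightarrow> int poly" where
  "poset_char_poly A = det (map_mat (\<lambda>a. [:a:]) A - [:0, 1:] \<cdot>\<^sub>m 1\<^sub>m (dim_row A))"

end

theory Submission
  imports Defs
begin


lemma rank1_det:
  fixes a :: "'a::comm_ring_1" and v :: "nat \<Rightarrow> 'a"
  assumes n: "n > 0"
  shows "det (mat n n (\<lambda>(i,j). (if i = j then a else 0) + v j)) = a ^ (n - 1) * (a + (\<Sum>j<n. v j))"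
proof -
  define R where "R = mat n n (\<lambda>(i,j). (if i = j then a else 0) + v j)"
  define D :: "'a mat" where "D = mat n n (\<lambda>(i,j). if i = j then 1 else if j = i + 1 then -1 else 0)"
  define T :: "'a mat" where "T = mat n n (\<lambda>(i,j). if i \<le> j then 1 else 0)"
  define E :: "'a mat" where "E = mat n n (\<lambda>(i,j). if i + 1 < n then (if i = j then a else 0) - (if i + 1 = j then a else 0) else (if i = j then a else 0) + v j)"
  define F :: "'a mat" where "F = mat n n (\<lambda>(i,j). if i + 1 < n then (if i = j then a else 0) else (if n - 1 = j then a else 0) + (\<Sum>k\<in>{0..j}. v k))"
  have cR: "R \<in> carrier_mat n n" and cD: "D \<in> carrier_mat n n" and cT: "T \<in> carrier_mat n n"
    and cE: "E \<in> carrier_mat n n" and cF: "F \<in> carrier_mat n n"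
    by (auto simp: R_def D_def T_def E_def F_def)
  have dD: "det D = 1"
    by (subst det_upper_triangular[OF _ cD]) (auto simp: D_def diag_mat_def prod_list_zero_iff intro!: prod_list_neutral)
  have dT: "det T = 1"
    by (subst det_upper_triangular[OF _ cT]) (auto simp: T_def diag_mat_def intro!: prod_list_neutral)
  have DR: "D * R = E"
  proof (rule eq_matI)
    fix i j assume i: "i < dim_row E" and j: "j < dim_col E"
    hence i: "i < n" and j: "j < n" by (auto simp: E_def)
    have "(D * R) $$ (i,j) = (\<Sum>k<n. (if i = k then 1 else if k = i + 1 then -1 else 0) * R $$ (k, j))"
      using i j by (simp add: D_def R_def scalar_prod_def lessThan_atLeast0)
    also have "\<dots> = (\<Sum>k<n. (if k = i then R $$ (k,j) else 0) + (if k = i + 1 then - R $$ (k,j) else 0))"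
      by (rule sum.cong) auto
    also have "\<dots> = E $$ (i,j)"
      using i j by (auto simp: sum.distrib E_def R_def)
    finally show "(D * R) $$ (i,j) = E $$ (i,j)" .
  qed (auto simp: D_def E_def R_def)
  have ET: "E * T = F"
  proof (rule eq_matI)
    fix i j assume i: "i < dim_row F" and j: "j < dim_col F"
    hence i: "i < n" and j: "j < n" by (auto simp: F_def)
    have "(E * T) $$ (i,j) = (\<Sum>k<n. E $$ (i,k) * (if k \<le> j then 1 else 0))"
      using i j by (simp add: E_def T_def scalar_prod_def lessThan_atLeast0)
    also have "\<dots> = (\<Sum>k\<in>{0..j}. E $$ (i,k))"
    proof -
      have "(\<Sum>k<n. E $$ (i,k) * (if k \<le> j then 1 else 0)) = (\<Sum>k<n. if k \<le> j then E $$ (i,k) else 0)"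
        by (rule sum.cong) auto
      also have "\<dots> = (\<Sum>k\<in>{k\<in>{..<n}. k \<le> j}. E $$ (i,k))"
        by (rule sum.inter_filter[symmetric]) simp
      also have "{k\<in>{..<n}. k \<le> j} = {0..j}" using j by auto
      finally show ?thesis .
    qed
    also have "\<dots> = F $$ (i,j)"
    proof (cases "i + 1 < n")
      case True
      then show ?thesis using i j by (auto simp: E_def F_def sum_subtractf sum.delta)
    next
      case False
      then show ?thesis using i j n by (auto simp: E_def F_def sum.distrib sum.delta)
    qed
    finally show "(E * T) $$ (i,j) = F $$ (i,j)" .
  qed (auto simp: T_def F_def E_def)
  have "det F = prod_list (diag_mat F)"
    by (rule det_lower_triangular[OF _ cF]) (auto simp: F_def)
  also have "\<dots> = (\<Prod>i<n. F $$ (i,i))"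
    using prod_list_diag_prod[of F] cF by (simp add: lessThan_atLeast0)
  also have "\<dots> = a ^ (n - 1) * (a + (\<Sum>j<n. v j))"
  proof -
    obtain m where m: "n = Suc m" using n by (cases n) auto
    show ?thesis unfolding m prod.lessThan_Suc
      by (simp add: F_def m atLeast0AtMost lessThan_Suc_atMost)
  qed
  finally have dF: "det F = a ^ (n - 1) * (a + (\<Sum>j<n. v j))" .
  have "det F = det (D * R * T)" using DR ET by simp
  also have "\<dots> = det R"
    using det_mult[OF mult_carrier_mat[OF cD cR] cT] det_mult[OF cD cR] dD dT by simp
  finally show ?thesis using dF R_def by simp
qed



definition nb :: "nat \<Rightarrow> nat \<Rightarrow> bool" where
  "nb i j \<longleftrightarrow> even i \<and> (j = i + 1 \<or> i = j + 1)"

lemma nb_nb: "nb i k \<Longrightarrow> nb k j \<Longrightarrow> False"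
  unfolding nb_def by auto

lemma nb_count: "(\<Sum>j<n. \<Sum>k<n. (if nb k j then 1 else 0 :: 'a::comm_ring_1)) = of_nat (n - 1)"
proof (induction n)
  case 0 then show ?case by simp
next
  case (Suc n)
  have r1: "(\<Sum>k<n. (if nb k n then 1 else 0 :: 'a)) = (if odd n then 1 else 0)"
  proof -
    have "(\<Sum>k<n. (if nb k n then 1 else 0 :: 'a)) = (\<Sum>k<n. if k = n - 1 \<and> odd n then 1 else 0)"
      by (rule sum.cong) (auto simp: nb_def)
    also have "\<dots> = (if odd n then 1 else 0)"
      by (cases "odd n") (auto simp: sum.delta' odd_pos)
    finally show ?thesis .
  qed
  have r2: "(\<Sum>j<n. (if nb n j then 1 else 0 :: 'a)) = (if even n \<and> n > 0 then 1 else 0)"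
  proof -
    have "(\<Sum>j<n. (if nb n j then 1 else 0 :: 'a)) = (\<Sum>j<n. if j = n - 1 \<and> even n then 1 else 0)"
      by (rule sum.cong) (auto simp: nb_def)
    also have "\<dots> = (if even n \<and> n > 0 then 1 else 0)"
      by (cases "even n") (auto simp: sum.delta')
    finally show ?thesis .
  qed
  have "(\<Sum>j<Suc n. \<Sum>k<Suc n. (if nb k j then 1 else 0 :: 'a))
     = (\<Sum>j<n. \<Sum>k<n. (if nb k j then 1 else 0 :: 'a)) + (\<Sum>j<n. (if nb n j then 1 else 0))
       + ((\<Sum>k<n. (if nb k n then 1 else 0)) + (if nb n n then 1 else 0))"
    by (simp add: sum.distrib algebra_simps)
  also have "\<dots> = of_nat (n - 1) + (if n > 0 then 1 else 0)"
    using Suc.IH r1 r2 by (auto simp: nb_def)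
  also have "\<dots> = of_nat (Suc n - 1)" by (cases n) auto
  finally show ?case .
qed

lemma main_det:
  fixes mu :: "'a::idom"
  assumes n: "n > 0" and mu: "mu \<noteq> 0"
  shows "det (mat n n (\<lambda>(i,j). 1 - (if i = j then mu else 0) - (if nb i j then 1 else 0))) * mu ^ n
    = (- (mu^2)) ^ (n - 1) * (- (mu^2) + of_nat n * mu - of_nat (n - 1))"
proof -
  define Nf where "Nf = (\<lambda>i j. if nb i j then 1 else 0 :: 'a)"
  define M where "M = mat n n (\<lambda>(i,j). 1 - (if i = j then mu else 0) - Nf i j)"
  define P where "P = mat n n (\<lambda>(i,j). (if i = j then mu else 0) - Nf i j)"
  define c where "c = (\<lambda>j. \<Sum>k<n. Nf k j)"
  define Q where "Q = mat n n (\<lambda>(i,j). (if i = j then - (mu^2) else 0) + (mu - c j))"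
  define U where "U = mat n n (\<lambda>(i,j). (if i = j then mu else 0) - (if even i \<and> j = i + 1 then 1 else 0 :: 'a))"
  define L where "L = mat n n (\<lambda>(i,j). (if i = j then mu else 0) - (if even i \<and> i = j + 1 then 1 else 0 :: 'a))"
  have cM: "M \<in> carrier_mat n n" and cP: "P \<in> carrier_mat n n" and cU: "U \<in> carrier_mat n n"
    and cL: "L \<in> carrier_mat n n"
    by (auto simp: M_def P_def U_def L_def)
  have NN: "Nf i k * Nf k j = 0" for i k j
    using nb_nb[of i k j] by (auto simp: Nf_def)
  have MP: "M * P = Q"
  proof (rule eq_matI)
    fix i j assume i: "i < dim_row Q" and j: "j < dim_col Q"
    hence i: "i < n" and j: "j < n" by (auto simp: Q_def)
    have "(M * P) $$ (i,j) = (\<Sum>k<n. (1 - (if i = k then mu else 0) - Nf i k) * ((if k = j then mu else 0) - Nf k j))"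
      using i j by (simp add: M_def P_def scalar_prod_def lessThan_atLeast0)
    also have "\<dots> = (\<Sum>k<n. ((if k = j then mu else 0) - Nf k j) - (if k = i then mu * ((if i = j then mu else 0) - Nf i j) else 0)
        - (if k = j then mu * Nf i j else 0))"
    proof (rule sum.cong)
      fix k
      show "(1 - (if i = k then mu else 0) - Nf i k) * ((if k = j then mu else 0) - Nf k j) =
         ((if k = j then mu else 0) - Nf k j) - (if k = i then mu * ((if i = j then mu else 0) - Nf i j) else 0)
        - (if k = j then mu * Nf i j else 0)"
        using NN[of i k j] by (auto simp: algebra_simps)
    qed simp
    also have "\<dots> = Q $$ (i,j)"
      using i j by (simp add: sum_subtractf sum.delta sum.delta' Q_def c_def) (simp add: algebra_simps power2_eq_square)
    finally show "(M * P) $$ (i,j) = Q $$ (i,j)" .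
  qed (auto simp: M_def P_def Q_def)
  have UL: "U * L = mu \<cdot>\<^sub>m P"
  proof (rule eq_matI)
    fix i j assume i: "i < dim_row (mu \<cdot>\<^sub>m P)" and j: "j < dim_col (mu \<cdot>\<^sub>m P)"
    hence i: "i < n" and j: "j < n" by (auto simp: P_def)
    define u where "u = (\<lambda>i j::nat. if even i \<and> j = i + 1 then 1 else 0 :: 'a)"
    define l where "l = (\<lambda>i j::nat. if even i \<and> i = j + 1 then 1 else 0 :: 'a)"
    have ul: "u i k * l k j = 0" for i k j by (auto simp: u_def l_def)
    have Nul: "Nf i j = u i j + l i j" by (auto simp: Nf_def u_def l_def nb_def)
    have "(U * L) $$ (i,j) = (\<Sum>k<n. ((if i = k then mu else 0) - u i k) * ((if k = j then mu else 0) - l k j))"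
      using i j by (simp add: U_def L_def u_def l_def scalar_prod_def lessThan_atLeast0)
    also have "\<dots> = (\<Sum>k<n. (if k = i then mu * ((if i = j then mu else 0) - l i j) else 0)
        - (if k = j then mu * u i j else 0))"
    proof (rule sum.cong)
      fix k
      show "((if i = k then mu else 0) - u i k) * ((if k = j then mu else 0) - l k j) =
        (if k = i then mu * ((if i = j then mu else 0) - l i j) else 0) - (if k = j then mu * u i j else 0)"
        using ul[of i k j] by (auto simp: algebra_simps)
    qed simp
    also have "\<dots> = (mu \<cdot>\<^sub>m P) $$ (i,j)"
      using i j by (simp add: sum_subtractf sum.delta sum.delta' P_def Nul) (simp add: algebra_simps)
    finally show "(U * L) $$ (i,j) = (mu \<cdot>\<^sub>m P) $$ (i,j)" .
  qed (auto simp: U_def L_def P_def)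
  have dU: "det U = mu ^ n"
  proof -
    have "det U = prod_list (diag_mat U)"
      by (rule det_upper_triangular[OF _ cU]) (auto simp: U_def)
    also have "\<dots> = (\<Prod>i<n. U $$ (i,i))"
      using prod_list_diag_prod[of U] cU by (simp add: lessThan_atLeast0)
    also have "\<dots> = mu ^ n" by (simp add: U_def)
    finally show ?thesis .
  qed
  have dL: "det L = mu ^ n"
  proof -
    have "det L = prod_list (diag_mat L)"
      by (rule det_lower_triangular[OF _ cL]) (auto simp: L_def)
    also have "\<dots> = (\<Prod>i<n. L $$ (i,i))"
      using prod_list_diag_prod[of L] cL by (simp add: lessThan_atLeast0)
    also have "\<dots> = mu ^ n" by (simp add: L_def)
    finally show ?thesis .
  qed
  have e1: "det (U * L) = mu ^ n * det P" using UL cP by simp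
  have e2: "det (U * L) = mu ^ n * mu ^ n" using det_mult[OF cU cL] dU dL by simp
  have "mu ^ n \<noteq> 0" using mu by simp
  hence dP: "det P = mu ^ n" using e1 e2 by (metis mult_left_cancel)
  have "det Q = (- (mu^2)) ^ (n - 1) * (- (mu^2) + (\<Sum>j<n. mu - c j))"
    unfolding Q_def by (rule rank1_det[OF n])
  also have "(\<Sum>j<n. mu - c j) = of_nat n * mu - of_nat (n - 1)"
    using nb_count[of n] by (simp add: sum_subtractf c_def Nf_def)
  finally have dQ: "det Q = (- (mu^2)) ^ (n - 1) * (- (mu^2) + of_nat n * mu - of_nat (n - 1))"
    by (simp add: algebra_simps)
  have "det M * mu ^ n = det Q"
    using det_mult[OF cM cP] MP dP by simp
  with dQ show ?thesis unfolding M_def Nf_def by simp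
qed



lemma fence_nb: "i \<noteq> j \<Longrightarrow> fence_le (i + 1) (j + 1) \<longleftrightarrow> nb i j"
  unfolding fence_le_def nb_def by auto

lemma poly_ident:
  fixes m :: nat
  shows "[:(-1) ^ (m+2):] * ([:0, 1:] * [:- (int (m+2) - 2), 1:] * [:1,1:] ^ m) * [:1,1:] ^ (m+2)
    = (- ([:1,1:]^2)) ^ (m + 1) * (- ([:1,1:]^2) + of_nat (m+2) * [:1,1:] - of_nat (m + 1) :: int poly)"
proof -
  have "poly ([:(-1) ^ (m+2):] * ([:0, 1:] * [:- (int (m+2) - 2), 1:] * [:1,1:] ^ m) * [:1,1:] ^ (m+2)) x
    = poly ((- ([:1,1:]^2)) ^ (m + 1) * (- ([:1,1:]^2) + of_nat (m+2) * [:1,1:] - of_nat (m + 1) :: int poly)) x" for x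
  proof -
    define s :: int where "s = (-1)^m"
    define A where "A = (1 + x) ^ (2*m+2)"
    have p1: "poly ([:(-1) ^ (m+2):] * ([:0, 1:] * [:- (int (m+2) - 2), 1:] * [:1,1:] ^ m) * [:1,1:] ^ (m+2)) x
       = (-1)^(m+2) * (x * (x - int m)) * ((1+x)^m * (1+x)^(m+2))"
      by (simp add: algebra_simps)
    have p2: "poly ((- ([:1,1:]^2)) ^ (m + 1) * (- ([:1,1:]^2) + of_nat (m+2) * [:1,1:] - of_nat (m + 1) :: int poly)) x
       = (- ((1+x)^2)) ^ (m+1) * (- ((1+x)^2) + int (m+2) * (1+x) - int (m+1))"
      by (simp add: of_nat_poly algebra_simps)
    have q1: "(- ((1 + x)^2)) ^ (m + 1) = - s * A"
      unfolding power_minus[of "(1+x)^2"] power_mult[symmetric] s_def A_def by (simp add: algebra_simps)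
    have q2: "(1+x)^m * (1+x)^(m+2) = A" unfolding A_def by (simp add: power_add[symmetric] mult_2)
    have q3: "(-1::int)^(m+2) = s" unfolding s_def by simp
    have q4: "- ((1+x)^2) + int (m+2) * (1+x) - int (m+1) = - (x * (x - int m))"
      by (simp add: algebra_simps power2_eq_square)
    have "(-1::int)^(m+2) * (x * (x - int m)) * ((1+x)^m * (1+x)^(m+2)) = s * (x * (x - int m)) * A"
      by (simp only: q2 q3)
    moreover have "(- ((1+x)^2)) ^ (m+1) * (- ((1+x)^2) + int (m+2) * (1+x) - int (m+1)) = s * (x * (x - int m)) * A"
      by (simp only: q1 q4) (simp add: algebra_simps)
    ultimately show ?thesis unfolding p1 p2 by simp
  qed
  thus ?thesis using poly_eq_poly_eq_iff by blast
qed

theorem mainTheorem14: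
  fixes n :: nat
  assumes "n \<ge> 2"
  shows "poset_char_poly (fence_matrix n) =
    [:(-1) ^ n:] * ([:0, 1:] * [:- (int n - 2), 1:] * [:1, 1:] ^ (n - 2))"
proof -
  define mu :: "int poly" where "mu = [:1,1:]"
  have mu0: "mu \<noteq> 0" by (simp add: mu_def)
  have eqM: "map_mat (\<lambda>a. [:a:]) (fence_matrix n) - [:0, 1:] \<cdot>\<^sub>m 1\<^sub>m (dim_row (fence_matrix n))
     = mat n n (\<lambda>(i,j). 1 - (if i = j then mu else 0) - (if nb i j then 1 else 0))"
  proof (rule eq_matI)
    fix i j assume "i < dim_row (mat n n (\<lambda>(i,j). 1 - (if i = j then mu else 0) - (if nb i j then 1 else 0 :: int poly)))"
      "j < dim_col (mat n n (\<lambda>(i,j). 1 - (if i = j then mu else 0) - (if nb i j then 1 else 0 :: int poly)))"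
    hence i: "i < n" and j: "j < n" by auto
    show "(map_mat (\<lambda>a. [:a:]) (fence_matrix n) - [:0, 1:] \<cdot>\<^sub>m 1\<^sub>m (dim_row (fence_matrix n))) $$ (i,j)
      = mat n n (\<lambda>(i,j). 1 - (if i = j then mu else 0) - (if nb i j then 1 else 0)) $$ (i,j)"
    proof (cases "i = j")
      case True
      then show ?thesis using i j by (simp add: fence_matrix_def fence_le_def mu_def nb_def one_pCons)
    next
      case False
      then show ?thesis using i j fence_nb[OF False] by (simp add: fence_matrix_def one_pCons)
    qed
  qed (auto simp: fence_matrix_def)
  obtain m where m: "n = m + 2" using assms by (metis add.commute le_Suc_ex)
  have "poset_char_poly (fence_matrix n) * mu ^ n = (- (mu^2)) ^ (n - 1) * (- (mu^2) + of_nat n * mu - of_nat (n - 1))"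
    unfolding poset_char_poly_def eqM by (rule main_det) (use assms mu0 in auto)
  also have "\<dots> = [:(-1) ^ n:] * ([:0, 1:] * [:- (int n - 2), 1:] * [:1, 1:] ^ (n - 2)) * mu ^ n"
    using poly_ident[of m] unfolding m mu_def by simp
  finally show ?thesis using mu0 by (metis mult_right_cancel power_not_zero)
qed

end
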